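(* For integers $m\ge2$ let $$P(m)=\frac{m}{\sqrt\pi}\int_{-\infty}^{\infty}e^{-t^2}\bigl(1-\Phi(t)\bigr)^{m-1}\,dt.$$ Then $P(m)\le \dfrac{2\pi\sqrt2}{\sqrt{2m+1}}$ for all $m\ge 2$; in particular $P(m)\to0$ as $m\to\infty$.
   Context: $\Phi$ is the standard normal cumulative distribution function. $P(m)$ is the limit as the number of voters tends to infinity of the probability that a Condorcet winner exists among $m$ candidates under the impartial culture (each voter independently picks one of the $m!$ strict rankings uniformly at random). *)

theory Defs
  imports "HOL-Analysis.Analysis"
begin

definition Phi :: "real \<Rightarrow> real" where
  "Phi x = (LBINT s:{..x}. exp (- (s\<^sup>2) / 2) / sqrt (2 * pi))"

definition P :: "nat \<Rightarrow> real" where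
  "P m = real m / sqrt pi * (LBINT t. exp (- (t\<^sup>2)) * (1 - Phi t) ^ (m - 1))"

end

theory Submission
  imports Defs "HOL-Probability.Probability" "HOL-Real_Asymp.Real_Asymp"
begin


definition phi :: "real \<Rightarrow> real" where "phi s = exp (- (s\<^sup>2) / 2) / sqrt (2 * pi)"

lemma phi_std: "phi s = std_normal_density s"
  by (simp add: phi_def std_normal_density_def)

lemma phi_pos: "phi s > 0" by (simp add: phi_def)

lemma phi_cont[continuous_intros]: "continuous_on A phi"
  unfolding phi_def by (intro continuous_intros) auto

lemma phi_hbi: "has_bochner_integral lborel phi 1"
  using std_normal_moment_even[of 0] by (simp add: phi_std[abs_def])

lemma phi_int: "integrable lborel phi" using phi_hbi by (auto simp: has_bochner_integral_iff)
lemma phi_integral: "integral\<^sup>L lborel phi = 1" using phi_hbi by (auto simp: has_bochner_integral_iff)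

lemma phi_meas[measurable]: "phi \<in> borel_measurable borel"
  unfolding phi_def by measurable

lemma Phi_phi: "Phi x = (LBINT s:{..x}. phi s)"
  unfolding Phi_def phi_def by simp

lemma phi_set_int: "A \<in> sets lborel \<Longrightarrow> set_integrable lborel A phi"
  unfolding set_integrable_def by (rule integrable_mult_indicator) (use phi_int in auto)

lemma Phi_split: assumes "a \<le> u" shows "Phi u = (LBINT s:{..<a}. phi s) + integral {a..u} phi"
proof -
  have eq: "{..u} = {..<a} \<union> {a..u}" using assms by auto
  have "Phi u = (LBINT s:({..<a} \<union> {a..u}). phi s)" unfolding Phi_phi eq ..
  also have "\<dots> = (LBINT s:{..<a}. phi s) + (LBINT s:{a..u}. phi s)"
    by (rule set_integral_Un) (auto simp: phi_set_int)
  also have "(LBINT s:{a..u}. phi s) = integral {a..u} phi"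
    by (rule set_borel_integral_eq_integral(2)) (simp add: phi_set_int)
  finally show ?thesis .
qed

lemma Phi_deriv: "(Phi has_real_derivative phi x) (at x)"
proof -
  let ?C = "LBINT s:{..<x-1}. phi s"
  have "((\<lambda>u. integral {x-1..u} phi) has_real_derivative phi x) (at x within {x-1..x+1})"
    by (rule integral_has_real_derivative) (auto intro: phi_cont)
  then have "((\<lambda>u. integral {x-1..u} phi) has_real_derivative phi x) (at x)"
    by (simp add: at_within_Icc_at)
  then have "((\<lambda>u. ?C + integral {x-1..u} phi) has_real_derivative phi x) (at x)"
    by (auto intro!: derivative_eq_intros)
  then show ?thesis
    by (rule has_field_derivative_transform_within_open[where S="{x-1<..<x+1}"])
       (auto simp: Phi_split[of "x-1"])
qed

lemma Phi_cont: "continuous_on A Phi"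
  using Phi_deriv by (meson DERIV_isCont continuous_at_imp_continuous_on)

lemma Phi_top: "(Phi \<longlongrightarrow> 1) at_top"
proof -
  have "((\<lambda>y. \<integral> x. indicator {.. y} x *\<^sub>R phi x \<partial>lborel) \<longlongrightarrow> \<integral> x. phi x \<partial>lborel) at_top"
    by (rule tendsto_integral_at_top) (auto simp: phi_int)
  then show ?thesis by (simp add: Phi_phi[abs_def] set_lebesgue_integral_def phi_integral)
qed

lemma Phi_bot0: "((\<lambda>t. Phi (-t)) \<longlongrightarrow> 0) at_top"
proof -
  let ?s = "\<lambda>t x. indicator {..-t} x *\<^sub>R phi x"
  have h1: "(\<lambda>x. 0::real) \<in> borel_measurable lborel" by simp
  have h2: "\<And>t. ?s t \<in> borel_measurable lborel" by measurable
  have h4: "AE x in lborel. ((\<lambda>i. ?s i x) \<longlongrightarrow> 0) at_top"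
  proof (rule AE_I2)
    fix x :: real
    have "eventually (\<lambda>i. ?s i x = 0) at_top"
      using eventually_gt_at_top[of "-x"] by eventually_elim auto
    then show "((\<lambda>i. ?s i x) \<longlongrightarrow> 0) at_top"
      by (rule tendsto_eventually)
  qed
  have h5: "\<forall>\<^sub>F i in at_top. AE x in lborel. norm (?s i x) \<le> phi x"
    using phi_pos by (auto intro!: always_eventually AE_I2 simp: indicator_def less_imp_le)
  have "((\<lambda>t. integral\<^sup>L lborel (?s t)) \<longlongrightarrow> integral\<^sup>L lborel (\<lambda>x. 0::real)) at_top"
    using integral_dominated_convergence_at_top[OF h1 h2 phi_int h4 h5] by simp
  then show ?thesis by (simp add: Phi_phi[abs_def] set_lebesgue_integral_def)
qed

lemma Phi_bot: "(Phi \<longlongrightarrow> 0) at_bot"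
  using Phi_bot0 by (simp add: filterlim_at_bot_mirror)

lemma Phi_nonneg: "Phi x \<ge> 0"
  unfolding Phi_phi set_lebesgue_integral_def using phi_pos
  by (intro integral_nonneg_AE) (auto intro: less_imp_le simp: indicator_def)

lemma Phi_le1: "Phi x \<le> 1"
proof -
  have "integrable lborel (\<lambda>s. indicator {..x} s *\<^sub>R phi s)"
    using phi_set_int[of "{..x}"] unfolding set_integrable_def by simp
  then have "(LBINT s:{..x}. phi s) \<le> (LBINT s. phi s)"
    unfolding set_lebesgue_integral_def 
    by (rule integral_mono[OF _ phi_int]) (use phi_pos in \<open>auto simp: less_imp_le indicator_def\<close>)
  then show ?thesis by (simp add: Phi_phi set_lebesgue_integral_def phi_integral)
qed



lemma isCont_Phi: "isCont Phi x" using Phi_deriv by (rule DERIV_isCont)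
lemma isCont_phi: "isCont phi x" unfolding phi_def by (intro continuous_intros) auto

lemma key_int:
  fixes k :: nat
  shows "integrable lborel (\<lambda>t. phi t * (1 - Phi t)^k)"
    and "integral\<^sup>L lborel (\<lambda>t. phi t * (1 - Phi t)^k) = 1 / (k+1)"
proof -
  let ?F = "\<lambda>t. - ((1 - Phi t)^(k+1)) / (k+1)"
  let ?f = "\<lambda>t. phi t * (1 - Phi t)^k"
  have D: "DERIV ?F x :> ?f x" for x
  proof -
    have "DERIV (\<lambda>t. (1 - Phi t)^(k+1)) x :> real (k+1) * (1 - Phi x)^k * (0 - phi x)"
    proof -
      have d1: "DERIV (\<lambda>t. 1 - Phi t) x :> 0 - phi x" by (intro derivative_intros Phi_deriv)
      show ?thesis using DERIV_power[OF d1, of "k+1"] by (simp add: algebra_simps)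
    qed
    from DERIV_cmult[OF this, of "-1/(k+1)"]
    have "DERIV (\<lambda>t. -1/(k+1) * (1 - Phi t)^(k+1)) x :> ?f x"
      by (rule DERIV_cong) (simp add: field_simps)
    moreover have "(\<lambda>t. -1/(k+1) * (1 - Phi t)^(k+1)) = ?F" by (auto simp: fun_eq_iff)
    ultimately show ?thesis by simp
  qed
  have C: "isCont ?f x" for x
    by (intro continuous_intros isCont_phi isCont_Phi)
  have N: "AE x in lborel. -\<infinity> < ereal x \<longrightarrow> ereal x < \<infinity> \<longrightarrow> 0 \<le> ?f x"
    by (intro AE_I2 impI mult_nonneg_nonneg less_imp_le[OF phi_pos] zero_le_power) (simp add: Phi_le1)
  have A: "((?F \<circ> real_of_ereal) \<longlongrightarrow> - 1 / (k+1)) (at_right (-\<infinity>))"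
    unfolding ereal_tendsto_simps
    by (rule tendsto_eq_intros Phi_bot refl | simp)+
  have B: "((?F \<circ> real_of_ereal) \<longlongrightarrow> 0) (at_left \<infinity>)"
    unfolding ereal_tendsto_simps
    by (rule tendsto_eq_intros Phi_top refl | simp)+
  note R = interval_integral_FTC_nonneg[of "-\<infinity>" \<infinity> ?F ?f, OF _ D C N A B]
  from R(1) show "integrable lborel ?f" by (simp add: set_integrable_def)
  from R(2) show "integral\<^sup>L lborel ?f = 1 / (k+1)"
    by (simp add: interval_lebesgue_integral_def set_lebesgue_integral_def)
qed



lemma exp_sq_bot: "((\<lambda>t::real. exp (- (t^2))) \<longlongrightarrow> 0) at_bot" by real_asymp

lemma exp_le_Phi: "exp (- (t\<^sup>2)) \<le> 2 * sqrt (2*pi) * Phi t"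
proof -
  define g where "g t = 2 * sqrt (2*pi) * Phi t - exp (- (t\<^sup>2))" for t
  have gd: "DERIV g x :> 2 * sqrt (2*pi) * phi x + 2 * x * exp (- (x\<^sup>2))" for x
    unfolding g_def[abs_def]
    by (auto intro!: derivative_eq_intros Phi_deriv simp: algebra_simps)
  have gpos: "2 * sqrt (2*pi) * phi x + 2 * x * exp (- (x\<^sup>2)) \<ge> 0" for x
  proof -
    have e: "exp (- (x\<^sup>2)) = exp (- (x\<^sup>2)/2) * exp (- (x\<^sup>2)/2)"
      by (simp flip: exp_add)
    have p: "2 * sqrt (2*pi) * phi x = 2 * exp (- (x\<^sup>2)/2)"
      by (simp add: phi_def)
    have "1 + x\<^sup>2/2 \<le> exp (x\<^sup>2/2)" by (rule exp_ge_add_one_self)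
    moreover have "-x \<le> 1 + x\<^sup>2/2" using zero_le_square[of "x+1"] by (simp add: power2_eq_square algebra_simps; linarith)
    ultimately have "-x \<le> exp (x\<^sup>2/2)" by linarith
    then have "-x * exp (- (x\<^sup>2)/2) \<le> exp (x\<^sup>2/2) * exp (- (x\<^sup>2)/2)"
      by (rule mult_right_mono) simp
    also have "\<dots> = 1" by (simp flip: exp_add)
    finally have "0 \<le> 1 + x * exp (- (x\<^sup>2)/2)" by simp
    then have "0 \<le> 2 * exp (- (x\<^sup>2)/2) * (1 + x * exp (- (x\<^sup>2)/2))" by simp
    then show ?thesis unfolding p e by (simp add: algebra_simps)
  qed
  have mono: "g s \<le> g t" if "s \<le> t" for s
    by (rule DERIV_nonneg_imp_nondecreasing[OF that]) (use gd gpos in blast)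
  have lim: "(g \<longlongrightarrow> 0) at_bot"
  proof -
    note exp_sq_bot
    then have "((\<lambda>t. 2 * sqrt (2*pi) * Phi t - exp (- (t\<^sup>2))) \<longlongrightarrow> 2 * sqrt (2*pi) * 0 - 0) at_bot"
      by (intro tendsto_intros Phi_bot)
    then show ?thesis by (simp add: g_def[abs_def])
  qed
  have "0 \<le> g t"
    by (rule tendsto_le[OF trivial_limit_at_bot_linorder tendsto_const lim])
       (rule eventually_mono[OF eventually_le_at_bot[of t] mono])
  then show ?thesis by (simp add: g_def)
qed



lemma P_bound:
  assumes "m \<ge> 2"
  shows "P m \<le> 2 * pi * sqrt 2 / sqrt (2 * real m + 1)"
proof -
  obtain k where k: "m = k + 1" using assms by (metis add.commute add_2_eq_Suc' le_Suc_ex plus_1_eq_Suc)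
  define s where "s = sqrt (2 * real m + 1)"
  define r where "r = sqrt (2 * pi)"
  define L where "L = s / 2"
  define K where "K = 2 * r"
  have s0: "s > 0" and r0: "r > 0" and L0: "L > 0" and K0: "K > 0"
    by (auto simp: s_def r_def L_def K_def)
  have s2: "s * s = 2 * real m + 1" by (simp add: s_def)
  have r2: "r * r = 2 * pi" by (simp add: r_def)
  define f where "f t = exp (- (t\<^sup>2)) * (1 - Phi t)^k" for t
  define g1 where "g1 t = phi t * (1 - Phi t)^k" for t
  define g2 where "g2 t = phi t * (1 - Phi t)^(k+1)" for t
  define g where "g t = r/2 * ((L*K + 1/L) * g1 t - L*K * g2 t)" for t
  have f0: "f t \<ge> 0" for t using Phi_le1[of t] by (simp add: f_def)
  have pw: "f t \<le> g t" for t
  proof -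
    define a where "a = exp (- (t\<^sup>2) / 2)"
    have a2: "a * a = exp (- (t\<^sup>2))" by (simp add: a_def flip: exp_add)
    have ra: "r * phi t = a" by (simp add: a_def phi_def r_def)
    have aK: "a * a \<le> K * Phi t" using exp_le_Phi[of t] by (simp add: a2 K_def r_def)
    have "0 \<le> (L * a - 1) * (L * a - 1)" by simp
    then have "2 * L * a \<le> L * L * (a * a) + 1" by (simp add: algebra_simps)
    also have "\<dots> \<le> L * L * (K * Phi t) + 1"
      using aK L0 by (simp add: mult_left_mono)
    finally have "2 * L * a \<le> L * L * (K * Phi t) + 1" .
    then have ab: "a \<le> (L * (K * Phi t) + 1 / L) / 2"
      using L0 by (simp add: field_simps)
    have q0: "0 \<le> r * phi t * (1 - Phi t)^k"
      using r0 phi_pos[of t] Phi_le1[of t] by simp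
    have "f t = (r * phi t * (1 - Phi t)^k) * a" by (simp add: f_def a2[symmetric] ra[symmetric])
    also have "\<dots> \<le> (r * phi t * (1 - Phi t)^k) * ((L * (K * Phi t) + 1 / L) / 2)"
      by (rule mult_left_mono[OF ab q0])
    also have "\<dots> = g t" by (simp add: g_def g1_def g2_def algebra_simps)
    finally show ?thesis .
  qed
  have ig1: "integrable lborel g1" and Ig1: "integral\<^sup>L lborel g1 = 1 / (k+1)"
    using key_int[of k] by (simp_all add: g1_def[abs_def])
  have ig2: "integrable lborel g2" and Ig2: "integral\<^sup>L lborel g2 = 1 / (k+2)"
    using key_int[of "k+1"] by (simp_all add: g2_def[abs_def])
  have ig: "integrable lborel g" unfolding g_def[abs_def] using ig1 ig2 by auto
  have Ig: "integral\<^sup>L lborel g = r/2 * ((L*K + 1/L) / (k+1) - L*K / (k+2))"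
    unfolding g_def[abs_def] using ig1 ig2 by (simp add: Ig1 Ig2)
  have fm: "f \<in> borel_measurable borel"
    unfolding f_def[abs_def]
    by (intro borel_measurable_continuous_onI continuous_intros Phi_cont)
  have if_: "integrable lborel f"
    by (rule Bochner_Integration.integrable_bound[OF ig]) (use fm f0 pw in \<open>auto intro!: AE_I2 simp: abs_le_iff order_trans[OF _ abs_ge_self]\<close>)
  have J: "integral\<^sup>L lborel f \<le> integral\<^sup>L lborel g"
    by (rule integral_mono[OF if_ ig pw])
  have Pm: "P m = real m / sqrt pi * integral\<^sup>L lborel f"
    by (simp add: P_def f_def[abs_def] k)
  have "P m \<le> real m / sqrt pi * (r/2 * ((L*K + 1/L) / (k+1) - L*K / (k+2)))"
    unfolding Pm Ig[symmetric] by (rule mult_left_mono[OF J]) simp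
  also have "\<dots> = sqrt 2 / 2 * (s * r / (k+2) + 2 / s)"
  proof -
    define X where "X = (L*K + 1/L) / (k+1) - L*K / (k+2)"
    have "r = sqrt 2 * sqrt pi" by (simp add: r_def real_sqrt_mult)
    then have 1: "real m / sqrt pi * (r/2 * X) = sqrt 2 / 2 * (real m * X)" by simp
    have LK: "L * K = s * r" and iL: "1 / L = 2 / s" by (simp_all add: L_def K_def)
    have 2: "real m * X = s * r / (k+2) + 2 / s"
    proof -
      define u where "u = real k"
      have u0: "u \<ge> 0" by (simp add: u_def)
      have m: "real m = u + 1" by (simp add: u_def k)
      have X: "X = (s*r + 2/s) / (u+1) - s*r / (u+2)"
        by (simp add: X_def LK iL u_def add.commute)
      have e1: "(u+1) * X = (s*r + 2/s) - (u+1) * (s*r/(u+2))"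
        using u0 by (simp add: X right_diff_distrib)
      have e2: "(u+1) * (s*r/(u+2)) = s*r - s*r/(u+2)"
        using u0 by (simp add: field_simps)
      show ?thesis using e1 e2 m by (simp add: u_def)
    qed
    show ?thesis using 1 2 by (simp add: X_def)
  qed
  also have "\<dots> \<le> 2 * pi * sqrt 2 / s"
  proof -
    have "s * s * r / (k+2) \<le> 2 * r"
      using r0 by (simp add: s2 k field_simps)
    moreover have "2 * r \<le> r * r + 1"
      using zero_le_square[of "r - 1"] by (simp add: power2_eq_square algebra_simps)
    moreover have "pi > 3" by (rule pi_gt3)
    ultimately have "s * s * r / (k+2) + 2 \<le> 4 * pi" using r2 by linarith
    moreover have "s * (s * r / (k+2) + 2 / s) = s * s * r / (k+2) + 2"
      using s0 by (simp add: distrib_left)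
    ultimately have "s * (s * r / (k+2) + 2 / s) \<le> 4 * pi" by simp
    then have Y: "s * r / (k+2) + 2 / s \<le> 4 * pi / s" using s0 by (simp add: pos_le_divide_eq mult.commute)
    have "sqrt 2 / 2 * (s * r / (k+2) + 2 / s) \<le> sqrt 2 / 2 * (4 * pi / s)"
      by (rule mult_left_mono[OF Y]) simp
    also have "\<dots> = 2 * pi * sqrt 2 / s" by simp
    finally show ?thesis .
  qed
  finally show ?thesis by (simp add: s_def)
qed


lemma P_nonneg: "P m \<ge> 0"
  unfolding P_def using Phi_le1
  by (intro mult_nonneg_nonneg integral_nonneg_AE AE_I2) auto

lemma bound_lim: "(\<lambda>m::nat. 2 * pi * sqrt 2 / sqrt (2 * real m + 1)) \<longlonglongrightarrow> 0"
  by real_asymp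

theorem mainTheorem5:
  shows "(\<forall>m::nat. m \<ge> 2 \<longrightarrow> P m \<le> 2 * pi * sqrt 2 / sqrt (2 * real m + 1))
         \<and> P \<longlonglongrightarrow> 0"
proof
  show "\<forall>m::nat. m \<ge> 2 \<longrightarrow> P m \<le> 2 * pi * sqrt 2 / sqrt (2 * real m + 1)"
    using P_bound by blast
  show "P \<longlonglongrightarrow> 0"
  proof (rule tendsto_sandwich[OF _ _ tendsto_const bound_lim])
    show "\<forall>\<^sub>F n in sequentially. 0 \<le> P n" by (simp add: P_nonneg)
    show "\<forall>\<^sub>F n in sequentially. P n \<le> 2 * pi * sqrt 2 / sqrt (2 * real n + 1)"
      using eventually_ge_at_top[of "2::nat"] by eventually_elim (rule P_bound)
  qed
qed

end
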